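(* If the Fischer space $\Pi(D)$ is of symplectic type, then $\mathcal{A}(D)/\mathcal{V}(D)$ is an abelian Lie algebra (all products are zero).
   Context: Let $D$ be a class of $3$-transpositions generating a group $G$ (a conjugacy class of involutions with $o(de)\in\{1,2,3\}$ for $d,e\in D$). $\Pi(D)$ has point set $D$ and lines the triples $\{d,e,d^e\}$ with $d,e$ non-commuting; it is of symplectic type if it contains a dual affine plane of order $2$ but no affine plane of order $3$ as subspace generated by two intersecting lines. $\mathcal{A}(D)$ is the $\mathbb{F}_2$-space with basis $D$ and bilinear product $d*e=d+e+f$ if $\{d,e,f\}$ is a line, $0$ otherwise; the form $\langle d,e\rangle$ is $1$ if $d,e$ do not commute and $0$ otherwise; $\mathcal{V}(D)$ is its radical. *)

theory Defs
  imports "HOL-Algebra.Multiplicative_Group" "HOL-Algebra.Generated_Groups" "HOL-Library.Z2"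
begin

definition three_transposition_class :: "('a, 'b) monoid_scheme \<Rightarrow> 'a set \<Rightarrow> bool" where
  "three_transposition_class G D \<longleftrightarrow>
     group G \<and> D \<subseteq> carrier G \<and>
     (\<exists>d0\<in>D. D = {g \<otimes>\<^bsub>G\<^esub> d0 \<otimes>\<^bsub>G\<^esub> inv\<^bsub>G\<^esub> g | g. g \<in> carrier G}) \<and>
     (\<forall>d\<in>D. d \<noteq> \<one>\<^bsub>G\<^esub> \<and> d \<otimes>\<^bsub>G\<^esub> d = \<one>\<^bsub>G\<^esub>) \<and>
     (\<forall>d\<in>D. \<forall>e\<in>D. group.ord G (d \<otimes>\<^bsub>G\<^esub> e) \<in> {1, 2, 3})"

definition generates :: "('a, 'b) monoid_scheme \<Rightarrow> 'a set \<Rightarrow> bool" where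
  "generates G D \<longleftrightarrow> generate G D = carrier G"

definition conj_by :: "('a, 'b) monoid_scheme \<Rightarrow> 'a \<Rightarrow> 'a \<Rightarrow> 'a" where
  "conj_by G d e = inv\<^bsub>G\<^esub> e \<otimes>\<^bsub>G\<^esub> d \<otimes>\<^bsub>G\<^esub> e"

definition commute :: "('a, 'b) monoid_scheme \<Rightarrow> 'a \<Rightarrow> 'a \<Rightarrow> bool" where
  "commute G d e \<longleftrightarrow> d \<otimes>\<^bsub>G\<^esub> e = e \<otimes>\<^bsub>G\<^esub> d"

definition fischer_lines :: "('a, 'b) monoid_scheme \<Rightarrow> 'a set \<Rightarrow> 'a set set" where
  "fischer_lines G D = {{d, e, conj_by G d e} | d e. d \<in> D \<and> e \<in> D \<and> \<not> commute G d e}"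

definition fischer_subspace :: "('a, 'b) monoid_scheme \<Rightarrow> 'a set \<Rightarrow> 'a set \<Rightarrow> bool" where
  "fischer_subspace G D S \<longleftrightarrow> S \<subseteq> D \<and>
     (\<forall>L\<in>fischer_lines G D. \<forall>x\<in>L. \<forall>y\<in>L. x \<noteq> y \<and> x \<in> S \<and> y \<in> S \<longrightarrow> L \<subseteq> S)"

definition generated_subspace :: "('a, 'b) monoid_scheme \<Rightarrow> 'a set \<Rightarrow> 'a set \<Rightarrow> 'a set" where
  "generated_subspace G D X = \<Inter>{S. fischer_subspace G D S \<and> X \<subseteq> S}"

definition induced_lines :: "('a, 'b) monoid_scheme \<Rightarrow> 'a set \<Rightarrow> 'a set \<Rightarrow> 'a set set" where
  "induced_lines G D P = {L \<in> fischer_lines G D. L \<subseteq> P}"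

definition is_dual_affine_plane_2 :: "('a, 'b) monoid_scheme \<Rightarrow> 'a set \<Rightarrow> 'a set \<Rightarrow> bool" where
  "is_dual_affine_plane_2 G D P \<longleftrightarrow> finite P \<and> card P = 6 \<and>
     (\<forall>x\<in>P. card {L \<in> induced_lines G D P. x \<in> L} = 2) \<and>
     (\<forall>L1\<in>induced_lines G D P. \<forall>L2\<in>induced_lines G D P. L1 \<noteq> L2 \<longrightarrow> card (L1 \<inter> L2) = 1)"

text \<open>Affine plane of order 3 (9 points, every two distinct points on a common line;
  lines have 3 points, so this is the Steiner triple system AG(2,3)).\<close>
definition is_affine_plane_3 :: "('a, 'b) monoid_scheme \<Rightarrow> 'a set \<Rightarrow> 'a set \<Rightarrow> bool" where
  "is_affine_plane_3 G D P \<longleftrightarrow> finite P \<and> card P = 9 \<and>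
     (\<forall>x\<in>P. \<forall>y\<in>P. x \<noteq> y \<longrightarrow> (\<exists>L\<in>induced_lines G D P. x \<in> L \<and> y \<in> L))"

definition fischer_plane :: "('a, 'b) monoid_scheme \<Rightarrow> 'a set \<Rightarrow> 'a set \<Rightarrow> bool" where
  "fischer_plane G D P \<longleftrightarrow> (\<exists>L1\<in>fischer_lines G D. \<exists>L2\<in>fischer_lines G D.
      L1 \<noteq> L2 \<and> L1 \<inter> L2 \<noteq> {} \<and> P = generated_subspace G D (L1 \<union> L2))"

definition symplectic_type :: "('a, 'b) monoid_scheme \<Rightarrow> 'a set \<Rightarrow> bool" where
  "symplectic_type G D \<longleftrightarrow>
     (\<exists>P. fischer_plane G D P \<and> is_dual_affine_plane_2 G D P) \<and>
     \<not> (\<exists>P. fischer_plane G D P \<and> is_affine_plane_3 G D P)"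

text \<open>The F_2-space A(D) with basis D: finitely supported functions D -> F_2.\<close>
definition alg_space :: "'a set \<Rightarrow> ('a \<Rightarrow> bit) set" where
  "alg_space D = {x. finite {d. x d \<noteq> 0} \<and> {d. x d \<noteq> 0} \<subseteq> D}"

definition supp :: "('a \<Rightarrow> bit) \<Rightarrow> 'a set" where
  "supp x = {d. x d \<noteq> 0}"

definition basis_prod :: "('a, 'b) monoid_scheme \<Rightarrow> 'a \<Rightarrow> 'a \<Rightarrow> ('a \<Rightarrow> bit)" where
  "basis_prod G d e = (if \<not> commute G d e
     then (\<lambda>c. (if c = d then 1 else 0) + (if c = e then 1 else 0) + (if c = conj_by G d e then 1 else 0))
     else (\<lambda>c. 0))"

definition alg_prod :: "('a, 'b) monoid_scheme \<Rightarrow> ('a \<Rightarrow> bit) \<Rightarrow> ('a \<Rightarrow> bit) \<Rightarrow> ('a \<Rightarrow> bit)" where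
  "alg_prod G x y = (\<lambda>c. \<Sum>d\<in>supp x. \<Sum>e\<in>supp y. x d * y e * basis_prod G d e c)"

definition basis_form :: "('a, 'b) monoid_scheme \<Rightarrow> 'a \<Rightarrow> 'a \<Rightarrow> bit" where
  "basis_form G d e = (if commute G d e then 0 else 1)"

definition alg_form :: "('a, 'b) monoid_scheme \<Rightarrow> ('a \<Rightarrow> bit) \<Rightarrow> ('a \<Rightarrow> bit) \<Rightarrow> bit" where
  "alg_form G x y = (\<Sum>d\<in>supp x. \<Sum>e\<in>supp y. x d * y e * basis_form G d e)"

definition alg_radical :: "('a, 'b) monoid_scheme \<Rightarrow> 'a set \<Rightarrow> ('a \<Rightarrow> bit) set" where
  "alg_radical G D = {x \<in> alg_space D. \<forall>y\<in>alg_space D. alg_form G x y = 0}"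

end

theory Submission
  imports Defs
begin

declare add_bit_eq_xor[simp del] mult_bit_eq_and[simp del]

locale tt3 = group G for G (structure) +
  fixes D
  assumes Dsub: "D \<subseteq> carrier G"
    and invol: "\<And>d. d \<in> D \<Longrightarrow> d \<otimes> d = \<one>"
    and conjcl: "\<And>x y. x \<in> D \<Longrightarrow> y \<in> D \<Longrightarrow> conj_by G x y \<in> D"
    and braid: "\<And>x y. x \<in> D \<Longrightarrow> y \<in> D \<Longrightarrow> \<not> commute G x y \<Longrightarrow> x \<otimes> y \<otimes> x = y \<otimes> x \<otimes> y"
begin

lemma Dc[simp]: "a \<in> D \<Longrightarrow> a \<in> carrier G" using Dsub by auto

lemma canc[simp]: "a \<in> D \<Longrightarrow> x \<in> carrier G \<Longrightarrow> a \<otimes> (a \<otimes> x) = x"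
  by (metis Dc invol l_one m_assoc)

lemma inv2[simp]: "a \<in> D \<Longrightarrow> a \<otimes> a = \<one>" by (rule invol)

lemma invD[simp]: "a \<in> D \<Longrightarrow> inv a = a"
  by (simp add: inv_equality invol)

lemma conjw: "g \<in> D \<Longrightarrow> x \<in> carrier G \<Longrightarrow> conj_by G x g = g \<otimes> (x \<otimes> g)"
  by (simp add: conj_by_def m_assoc)

lemma conjw2: "g \<in> carrier G \<Longrightarrow> g \<otimes> g = \<one> \<Longrightarrow> x \<in> carrier G \<Longrightarrow> conj_by G x g = g \<otimes> (x \<otimes> g)"
  by (simp add: conj_by_def m_assoc inv_equality)

lemma braidr: "x \<in> D \<Longrightarrow> y \<in> D \<Longrightarrow> \<not> commute G x y \<Longrightarrow> z \<in> carrier G \<Longrightarrow> x \<otimes> (y \<otimes> (x \<otimes> z)) = y \<otimes> (x \<otimes> (y \<otimes> z))"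
proof -
  assume a: "x \<in> D" "y \<in> D" "\<not> commute G x y" "z \<in> carrier G"
  have "x \<otimes> (y \<otimes> (x \<otimes> z)) = (x \<otimes> y \<otimes> x) \<otimes> z" using a by (simp add: m_assoc)
  also have "\<dots> = (y \<otimes> x \<otimes> y) \<otimes> z" using braid a by simp
  finally show ?thesis using a by (simp add: m_assoc)
qed

lemma braid2: "x \<in> D \<Longrightarrow> y \<in> D \<Longrightarrow> \<not> commute G x y \<Longrightarrow> x \<otimes> (y \<otimes> x) = y \<otimes> (x \<otimes> y)"
  using braid by (simp add: m_assoc)

lemma line1: assumes "a \<in> D" "b \<in> D" "\<not> commute G a b"
  shows "conj_by G b a = conj_by G a b"
    and "conj_by G a (conj_by G a b) = b"
    and "conj_by G (conj_by G a b) a = b"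
    and "conj_by G b (conj_by G a b) = a"
    and "conj_by G (conj_by G a b) b = a"
proof -
  have z: "conj_by G a b \<in> D" using conjcl assms by auto
  have br: "a \<otimes> (b \<otimes> a) = b \<otimes> (a \<otimes> b)" using braid2 assms by auto
  have br3: "\<And>w. w \<in> carrier G \<Longrightarrow> a \<otimes> (b \<otimes> (a \<otimes> w)) = b \<otimes> (a \<otimes> (b \<otimes> w))" using braidr assms by auto
  show "conj_by G b a = conj_by G a b" using assms by (simp add: conjw br)
  show "conj_by G a (conj_by G a b) = b" using assms z
    by (simp add: conjw m_assoc br3 flip: br)
  show "conj_by G (conj_by G a b) a = b" using assms z
    by (simp add: conjw m_assoc br3)
  show "conj_by G b (conj_by G a b) = a" using assms z
    by (simp add: conjw m_assoc br3)
  show "conj_by G (conj_by G a b) b = a" using assms z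
    by (simp add: conjw m_assoc br3)
qed


lemma conj_self: "a \<in> D \<Longrightarrow> conj_by G a a = a"
  by (simp add: conjw)

lemma conj_inv: "g \<in> D \<Longrightarrow> x \<in> D \<Longrightarrow> conj_by G (conj_by G x g) g = x"
  by (simp add: conjw m_assoc)

lemma conj_auto: "g \<in> D \<Longrightarrow> x \<in> D \<Longrightarrow> y \<in> D \<Longrightarrow>
   conj_by G (conj_by G x y) g = conj_by G (conj_by G x g) (conj_by G y g)"
  by (simp add: conjw conjw2 m_assoc)

lemma comm_sym: "commute G x y \<longleftrightarrow> commute G y x"
  by (auto simp: commute_def)

lemma comm_refl: "commute G x x"
  by (auto simp: commute_def)

lemma comm_conj: "g \<in> D \<Longrightarrow> x \<in> D \<Longrightarrow> y \<in> D \<Longrightarrow> commute G x y \<Longrightarrow>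
   commute G (conj_by G x g) (conj_by G y g)"
  unfolding commute_def
  by (simp add: conjw m_assoc) (metis Dc m_assoc m_closed)

lemma comm_conj_iff: "g \<in> D \<Longrightarrow> x \<in> D \<Longrightarrow> y \<in> D \<Longrightarrow>
   commute G (conj_by G x g) (conj_by G y g) \<longleftrightarrow> commute G x y"
  by (metis comm_conj conj_inv conjcl)

lemma comm_prod: "w \<in> D \<Longrightarrow> x \<in> D \<Longrightarrow> y \<in> D \<Longrightarrow> commute G w x \<Longrightarrow> commute G w y \<Longrightarrow>
   commute G w (conj_by G x y)"
  unfolding commute_def
  by (simp add: conjw) (metis Dc m_assoc m_closed)

lemma ncz: assumes "a \<in> D" "b \<in> D" "\<not> commute G a b"
  shows "\<not> commute G a (conj_by G a b)" "\<not> commute G b (conj_by G a b)"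
proof -
  have z: "conj_by G a b \<in> D" using conjcl assms by auto
  show "\<not> commute G a (conj_by G a b)"
  proof
    assume "commute G a (conj_by G a b)"
    then have "commute G (conj_by G a a) (conj_by G (conj_by G a b) a)"
      using comm_conj assms z by blast
    then show False using assms line1 conj_self by auto
  qed
  show "\<not> commute G b (conj_by G a b)"
  proof
    assume "commute G b (conj_by G a b)"
    then have "commute G (conj_by G b b) (conj_by G (conj_by G a b) b)"
      using comm_conj assms z by blast
    then show False using assms line1 conj_self by (auto simp: comm_sym)
  qed
qed

lemma conj_conj: "g \<in> D \<Longrightarrow> X \<in> D \<Longrightarrow> Y \<in> D \<Longrightarrow>
   conj_by G X (conj_by G Y g) = conj_by G (conj_by G (conj_by G X g) Y) g"
  by (simp add: conjw conjw2 m_assoc)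

lemma line_in: "a \<in> D \<Longrightarrow> b \<in> D \<Longrightarrow> \<not> commute G a b \<Longrightarrow> {a, b, conj_by G a b} \<in> fischer_lines G D"
  unfolding fischer_lines_def by blast

lemma closure_sub: "fischer_subspace G D S \<Longrightarrow> a \<in> S \<Longrightarrow> b \<in> S \<Longrightarrow> a \<in> D \<Longrightarrow> b \<in> D
  \<Longrightarrow> \<not> commute G a b \<Longrightarrow> conj_by G a b \<in> S"
proof -
  assume a: "fischer_subspace G D S" "a \<in> S" "b \<in> S" "a \<in> D" "b \<in> D" "\<not> commute G a b"
  have L: "{a, b, conj_by G a b} \<in> fischer_lines G D" using a unfolding fischer_lines_def by blast
  have "a \<noteq> b" using a comm_refl by auto
  moreover have "\<forall>L\<in>fischer_lines G D. \<forall>x\<in>L. \<forall>y\<in>L. x \<noteq> y \<and> x \<in> S \<and> y \<in> S \<longrightarrow> L \<subseteq> S"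
    using a(1) unfolding fischer_subspace_def by blast
  ultimately have "{a, b, conj_by G a b} \<subseteq> S" using a(2,3) L by (meson insertCI)
  then show ?thesis by simp
qed

end

locale tri = tt3 +
  fixes d e c
  assumes dD: "d \<in> D" and eD: "e \<in> D" and cD: "c \<in> D"
    and nde: "\<not> commute G d e" and ndc: "\<not> commute G d c" and nec: "\<not> commute G e c"
    and ncf: "\<not> commute G c (conj_by G d e)"
begin

definition "f = conj_by G d e"
definition "x = conj_by G c d"

definition psi :: "int \<Rightarrow> int \<Rightarrow> 'a" where
  "psi a b = (if a = 0 then (if b = 0 then d else if b = 1 then c else x)
     else if a = 1 then (if b = 0 then e else if b = 1 then conj_by G x f else conj_by G c f)
     else (if b = 0 then f else if b = 1 then conj_by G x e else conj_by G c e))"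

lemma fD: "f \<in> D" and xD: "x \<in> D" using conjcl dD eD cD by (auto simp: f_def x_def)

lemma ncf': "\<not> commute G c f" using ncf by (simp add: f_def)
lemma ncd: "\<not> commute G c d" using ndc comm_sym by blast
lemma nce: "\<not> commute G c e" using nec comm_sym by blast
lemma nxe: "\<not> commute G x e"
proof
  assume "commute G x e"
  then have "commute G (conj_by G x d) (conj_by G e d)" using comm_conj xD eD dD by blast
  then show False using line1[OF dD eD nde] line1[OF cD dD ncd] ncf' by (simp add: x_def f_def)
qed
lemma ndcf: "\<not> commute G d (conj_by G c f)"
proof
  assume "commute G d (conj_by G c f)"
  then have "commute G (conj_by G d f) (conj_by G (conj_by G c f) f)" using comm_conj cD fD dD conjcl by blast
  then show False using line1[OF dD eD nde] line1[OF cD fD ncf'] nec by (simp add: f_def)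
qed
lemma ndce: "\<not> commute G d (conj_by G c e)"
proof
  assume "commute G d (conj_by G c e)"
  then have "commute G (conj_by G d e) (conj_by G (conj_by G c e) e)" using comm_conj cD eD dD conjcl by blast
  then show False using line1[OF dD eD nde] line1[OF cD eD nce] ncf' by (simp add: f_def comm_sym)
qed

lemma psiD: "psi a b \<in> D"
  unfolding psi_def using conjcl dD eD cD fD xD by auto

lemmas L_de = line1[OF dD eD nde]
lemmas L_cd = line1[OF cD dD ncd]
lemmas L_ce = line1[OF cD eD nce]
lemmas L_cf = line1[OF cD fD ncf']
lemmas L_xe = line1[OF xD eD nxe]

lemma td1: "conj_by G (conj_by G c e) d = conj_by G x f"
  using conj_auto[OF dD cD eD] L_de by (simp add: x_def f_def)
lemma td2: "conj_by G (conj_by G c f) d = conj_by G x e"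
  using conj_auto[OF dD cD fD] L_de by (simp add: x_def f_def)
lemma td3: "conj_by G (conj_by G x f) d = conj_by G c e"
  using conj_auto[OF dD xD fD] L_de L_cd by (simp add: x_def f_def)
lemma td4: "conj_by G (conj_by G x e) d = conj_by G c f"
  using conj_auto[OF dD xD eD] L_de L_cd by (simp add: x_def f_def)

lemma tab_d: "a \<in> {0,1,2} \<Longrightarrow> b \<in> {0,1,2} \<Longrightarrow> conj_by G (psi a b) d = psi ((-a) mod 3) ((-b) mod 3)"
  using td1 td2 td3 td4 L_de L_cd conj_self[OF dD]
  by (auto simp: psi_def f_def x_def)

lemma te1: "conj_by G (conj_by G c f) e = conj_by G x f"
  using conj_auto[OF eD cD fD] L_de td1 by (simp add: f_def)
lemma te2: "conj_by G (conj_by G x f) e = conj_by G c f"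
  using conj_auto[OF eD xD fD] L_de td4 by (simp add: f_def)

lemma tab_e: "a \<in> {0,1,2} \<Longrightarrow> b \<in> {0,1,2} \<Longrightarrow> conj_by G (psi a b) e = psi ((-a-1) mod 3) ((-b) mod 3)"
  using te1 te2 L_de L_ce L_xe conj_self[OF eD]
  by (auto simp: psi_def f_def x_def)

lemma tc1: "conj_by G (conj_by G x f) c = conj_by G x e"
proof -
  have "conj_by G (conj_by G x f) c = conj_by G (conj_by G x c) (conj_by G f c)"
    using conj_auto[OF cD xD fD] .
  also have "\<dots> = conj_by G d (conj_by G c f)" using L_cd L_cf by (simp add: x_def)
  also have "\<dots> = conj_by G (conj_by G c f) d" using line1(1)[OF dD _ ndcf] conjcl[OF cD fD] by simp
  also have "\<dots> = conj_by G x e" using td2 .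
  finally show ?thesis .
qed
lemma tc2: "conj_by G (conj_by G x e) c = conj_by G x f"
proof -
  have "conj_by G (conj_by G x e) c = conj_by G (conj_by G x c) (conj_by G e c)"
    using conj_auto[OF cD xD eD] .
  also have "\<dots> = conj_by G d (conj_by G c e)" using L_cd L_ce by (simp add: x_def)
  also have "\<dots> = conj_by G (conj_by G c e) d" using line1(1)[OF dD _ ndce] conjcl[OF cD eD] by simp
  also have "\<dots> = conj_by G x f" using td1 .
  finally show ?thesis .
qed

lemma tab_c: "a \<in> {0,1,2} \<Longrightarrow> b \<in> {0,1,2} \<Longrightarrow> conj_by G (psi a b) c = psi ((-a) mod 3) ((-b-1) mod 3)"
  using tc1 tc2 L_cd L_ce L_cf conj_self[OF cD]
  by (auto simp: psi_def f_def x_def)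


definition pt :: "int \<Rightarrow> int \<Rightarrow> 'a" where "pt i j = psi (i mod 3) (j mod 3)"

lemma ptD: "pt a b \<in> D" by (simp add: pt_def psiD)

lemma pt_cong: "a mod 3 = a' mod 3 \<Longrightarrow> b mod 3 = b' mod 3 \<Longrightarrow> pt a b = pt a' b'"
  by (simp add: pt_def)

lemma m3: "(i::int) mod 3 \<in> {0,1,2}" by auto

lemma hm: "(- ((i::int) mod 3) - 1) mod 3 = (- i - 1) mod 3" by presburger

lemma pt_d: "conj_by G (pt i j) d = pt (-i) (-j)"
  using tab_d[OF m3 m3, of i j] by (simp add: pt_def mod_minus_eq)
lemma pt_e: "conj_by G (pt i j) e = pt (-i-1) (-j)"
  using tab_e[OF m3 m3, of i j] by (simp add: pt_def mod_minus_eq hm)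
lemma pt_c: "conj_by G (pt i j) c = pt (-i) (-j-1)"
  using tab_c[OF m3 m3, of i j] by (simp add: pt_def mod_minus_eq hm)

lemma p00: "pt 0 0 = d" and p10: "pt 1 0 = e" and p20: "pt 2 0 = f" and p01: "pt 0 1 = c"
  and p02: "pt 0 2 = x" and p11: "pt 1 1 = conj_by G x f" and p12: "pt 1 2 = conj_by G c f"
  and p21: "pt 2 1 = conj_by G x e" and p22: "pt 2 2 = conj_by G c e"
  by (simp_all add: pt_def psi_def)

lemma pt_f: "conj_by G (pt i j) f = pt (-i-2) (-j)"
proof -
  have "conj_by G (pt i j) f = conj_by G (conj_by G (conj_by G (pt i j) e) d) e"
    unfolding f_def using conj_conj[OF eD ptD dD] .
  also have "\<dots> = pt (-i-2) (-j)" by (simp add: pt_d pt_e) (rule pt_cong; presburger)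
  finally show ?thesis .
qed
lemma pt_x: "conj_by G (pt i j) x = pt (-i) (-j-2)"
proof -
  have "conj_by G (pt i j) x = conj_by G (conj_by G (conj_by G (pt i j) d) c) d"
    unfolding x_def using conj_conj[OF dD ptD cD] .
  also have "\<dots> = pt (-i) (-j-2)" by (simp add: pt_d pt_c) (rule pt_cong; presburger)
  finally show ?thesis .
qed
lemma pt_22: "conj_by G (pt i j) (pt 2 2) = pt (-i-2) (-j-2)"
proof -
  have "conj_by G (pt i j) (pt 2 2) = conj_by G (conj_by G (conj_by G (pt i j) e) c) e"
    unfolding p22 using conj_conj[OF eD ptD cD] .
  also have "\<dots> = pt (-i-2) (-j-2)" by (simp add: pt_e pt_c) (rule pt_cong; presburger)
  finally show ?thesis .
qed
lemma pt_21: "conj_by G (pt i j) (pt 2 1) = pt (-i-2) (-j-1)"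
proof -
  have "conj_by G (pt i j) (pt 2 1) = conj_by G (conj_by G (conj_by G (pt i j) e) x) e"
    unfolding p21 using conj_conj[OF eD ptD xD] .
  also have "\<dots> = pt (-i-2) (-j-1)" by (simp add: pt_e pt_x) (rule pt_cong; presburger)
  finally show ?thesis .
qed
lemma pt_12: "conj_by G (pt i j) (pt 1 2) = pt (-i-1) (-j-2)"
proof -
  have "conj_by G (pt i j) (pt 1 2) = conj_by G (conj_by G (conj_by G (pt i j) f) c) f"
    unfolding p12 using conj_conj[OF fD ptD cD] .
  also have "\<dots> = pt (-i-1) (-j-2)" by (simp add: pt_f pt_c) (rule pt_cong; presburger)
  finally show ?thesis .
qed
lemma pt_11: "conj_by G (pt i j) (pt 1 1) = pt (-i-1) (-j-1)"
proof -
  have "conj_by G (pt i j) (pt 1 1) = conj_by G (conj_by G (conj_by G (pt i j) f) x) f"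
    unfolding p11 using conj_conj[OF fD ptD xD] .
  also have "\<dots> = pt (-i-1) (-j-1)" by (simp add: pt_f pt_x) (rule pt_cong; presburger)
  finally show ?thesis .
qed

lemma pt_conj: "conj_by G (pt i j) (pt k l) = pt (-i-k) (-j-l)"
proof -
  have "pt k l = pt (k mod 3) (l mod 3)" by (rule pt_cong) auto
  moreover have "pt (-i-k) (-j-l) = pt (-i - k mod 3) (-j - l mod 3)" by (rule pt_cong; presburger)
  moreover have "conj_by G (pt i j) (pt a b) = pt (-i-a) (-j-b)" if "a \<in> {0,1,2}" "b \<in> {0,1,2}" for a b
    using that pt_d pt_e pt_c pt_f pt_x pt_22 pt_21 pt_12 pt_11 p00 p10 p20 p01 p02 by auto
  ultimately show ?thesis using m3 by metis
qed


lemma tr1: "commute G (pt a b) (pt a' b') \<Longrightarrow> commute G (pt (a+1) b) (pt (a'+1) b')"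
proof -
  assume h: "commute G (pt a b) (pt a' b')"
  have "commute G (conj_by G (conj_by G (pt a b) e) d) (conj_by G (conj_by G (pt a' b') e) d)"
    by (rule comm_conj[OF dD conjcl[OF ptD eD] conjcl[OF ptD eD]], rule comm_conj[OF eD ptD ptD h])
  then show ?thesis by (simp add: pt_e pt_d add.commute)
qed
lemma tr2: "commute G (pt a b) (pt a' b') \<Longrightarrow> commute G (pt a (b+1)) (pt a' (b'+1))"
proof -
  assume h: "commute G (pt a b) (pt a' b')"
  have "commute G (conj_by G (conj_by G (pt a b) c) d) (conj_by G (conj_by G (pt a' b') c) d)"
    by (rule comm_conj[OF dD conjcl[OF ptD cD] conjcl[OF ptD cD]], rule comm_conj[OF cD ptD ptD h])
  then show ?thesis by (simp add: pt_c pt_d add.commute)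
qed
lemma trneg: "commute G (pt a b) (pt a' b') \<Longrightarrow> commute G (pt (-a) (-b)) (pt (-a') (-b'))"
proof -
  assume h: "commute G (pt a b) (pt a' b')"
  have "commute G (conj_by G (pt a b) d) (conj_by G (pt a' b') d)"
    by (rule comm_conj[OF dD ptD ptD h])
  then show ?thesis by (simp add: pt_d)
qed
lemma tr1n: "commute G (pt a b) (pt a' b') \<Longrightarrow> commute G (pt (a + int n) b) (pt (a' + int n) b')"
proof (induction n)
  case 0 then show ?case by simp
next
  case (Suc n) then show ?case using tr1[of "a + int n" b "a' + int n" b'] by (simp add: ac_simps)
qed
lemma tr2n: "commute G (pt a b) (pt a' b') \<Longrightarrow> commute G (pt a (b + int n)) (pt a' (b' + int n))"
proof (induction n)
  case 0 then show ?case by simp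
next
  case (Suc n) then show ?case using tr2[of a "b + int n" a' "b' + int n"] by (simp add: ac_simps)
qed

lemma base11: "\<not> commute G (pt 0 0) (pt 1 1)"
proof
  assume "commute G (pt 0 0) (pt 1 1)"
  then have "commute G (pt (0 + int 2) 0) (pt (1 + int 2) 1)" by (rule tr1n)
  moreover have "pt (1 + int 2) 1 = pt 0 1" by (rule pt_cong) auto
  ultimately show False using ncf' p20 p01 comm_sym by auto
qed
lemma base21: "\<not> commute G (pt 0 0) (pt 2 1)"
proof
  assume "commute G (pt 0 0) (pt 2 1)"
  then have "commute G (pt (0 + int 1) 0) (pt (2 + int 1) 1)" by (rule tr1n)
  moreover have "pt (2 + int 1) 1 = pt 0 1" by (rule pt_cong) auto
  ultimately show False using nec p10 p01 by auto
qed
lemma baseneg: "\<not> commute G (pt 0 0) (pt u v) \<Longrightarrow> \<not> commute G (pt 0 0) (pt (-u) (-v))"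
  using trneg[of 0 0 "-u" "-v"] by auto

lemma base: "u \<in> {0,1,2} \<Longrightarrow> v \<in> {0,1,2} \<Longrightarrow> (u,v) \<noteq> (0,0) \<Longrightarrow> \<not> commute G (pt 0 0) (pt u v)"
proof -
  assume a: "u \<in> {0,1,2}" "v \<in> {0,1,2}" "(u,v) \<noteq> (0,0)"
  have b10: "\<not> commute G (pt 0 0) (pt 1 0)" using nde p00 p10 by simp
  have b01: "\<not> commute G (pt 0 0) (pt 0 1)" using ndc p00 p01 by simp
  have b20: "\<not> commute G (pt 0 0) (pt 2 0)"
    using baseneg[OF b10] pt_cong[of "-1" 2 "-0" 0] by simp
  have b02: "\<not> commute G (pt 0 0) (pt 0 2)"
    using baseneg[OF b01] pt_cong[of "-0" 0 "-1" 2] by simp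
  have b22: "\<not> commute G (pt 0 0) (pt 2 2)"
    using baseneg[OF base11] pt_cong[of "-1" 2 "-1" 2] by simp
  have b12: "\<not> commute G (pt 0 0) (pt 1 2)"
    using baseneg[OF base21] pt_cong[of "-2" 1 "-1" 2] by simp
  show ?thesis using a b10 b01 b20 b02 b22 b12 base11 base21 by auto
qed

lemma noncomm: "(a mod 3, b mod 3) \<noteq> (a' mod 3, b' mod 3) \<Longrightarrow> \<not> commute G (pt a b) (pt a' b')"
proof
  assume ne: "(a mod 3, b mod 3) \<noteq> (a' mod 3, b' mod 3)" and h: "commute G (pt a b) (pt a' b')"
  define n where "n = nat ((-a) mod 3)"
  define m where "m = nat ((-b) mod 3)"
  have "commute G (pt (a + int n) (b + int m)) (pt (a' + int n) (b' + int m))"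
    using tr2n[OF tr1n[OF h]] .
  moreover have "pt (a + int n) (b + int m) = pt 0 0" by (rule pt_cong) (simp_all add: n_def m_def; presburger)+
  moreover have "pt (a' + int n) (b' + int m) = pt ((a' + int n) mod 3) ((b' + int m) mod 3)"
    by (rule pt_cong) auto
  moreover have "((a' + int n) mod 3, (b' + int m) mod 3) \<noteq> (0,0)" using ne
    unfolding n_def m_def by auto presburger+
  ultimately show False using base[OF m3 m3] by metis
qed


definition "PP = {pt a b | a b. True}"

lemma PP_alt: "PP = (\<lambda>(a,b). pt a b) ` ({0,1,2} \<times> {0,1,2})"
proof
  show "PP \<subseteq> (\<lambda>(a,b). pt a b) ` ({0,1,2} \<times> {0,1,2})"
  proof
    fix u assume "u \<in> PP"
    then obtain a b where u: "u = pt a b" unfolding PP_def by auto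
    have uu: "u = pt (a mod 3) (b mod 3)" unfolding u by (rule pt_cong) auto
    have mem: "(a mod 3, b mod 3) \<in> {0,1,2} \<times> {0,1,2}" using m3[of a] m3[of b] by blast
    show "u \<in> (\<lambda>(a,b). pt a b) ` ({0,1,2} \<times> {0,1,2})" by (rule rev_image_eqI[OF mem]) (simp add: uu)
  qed
qed (auto simp: PP_def)

lemma PP_D: "PP \<subseteq> D"
proof
  fix u assume "u \<in> PP"
  then obtain a b where "u = pt a b" unfolding PP_def by blast
  then show "u \<in> D" using ptD by simp
qed

lemma PP_conj: "u \<in> PP \<Longrightarrow> v \<in> PP \<Longrightarrow> conj_by G u v \<in> PP"
proof -
  assume "u \<in> PP" "v \<in> PP"
  then obtain a b a' b' where "u = pt a b" "v = pt a' b'" unfolding PP_def by blast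
  then have "conj_by G u v = pt (-a-a') (-b-b')" by (simp add: pt_conj)
  then show ?thesis unfolding PP_def by blast
qed

lemma PP_nc: "u \<in> PP \<Longrightarrow> v \<in> PP \<Longrightarrow> u \<noteq> v \<Longrightarrow> \<not> commute G u v"
proof -
  assume "u \<in> PP" "v \<in> PP" "u \<noteq> v"
  then obtain a b a' b' where u: "u = pt a b" and v: "v = pt a' b'" and ne: "pt a b \<noteq> pt a' b'"
    unfolding PP_def by blast
  have "(a mod 3, b mod 3) \<noteq> (a' mod 3, b' mod 3)" using ne pt_cong by blast
  then show ?thesis using noncomm u v by simp
qed

lemma PP_card: "card PP = 9" and PP_fin: "finite PP"
proof -
  have inj: "inj_on (\<lambda>(a,b). pt a b) ({0,1,2} \<times> {0,1,2::int})"
  proof (rule inj_onI, clarify)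
    fix a b a' b' :: int
    assume "a \<in> {0,1,2}" "b \<in> {0,1,2}" "a' \<in> {0,1,2}" "b' \<in> {0,1,2}" "pt a b = pt a' b'"
    moreover have "(a mod 3, b mod 3) = (a' mod 3, b' mod 3)"
      using noncomm comm_refl \<open>pt a b = pt a' b'\<close> by metis
    moreover have "\<And>z::int. z \<in> {0,1,2} \<Longrightarrow> z mod 3 = z" by auto
    ultimately show "a = a' \<and> b = b'" by (metis prod.inject)
  qed
  have "card ({0,1,2::int} \<times> {0,1,2::int}) = 9" by simp
  then show "card PP = 9" unfolding PP_alt using card_image[OF inj] by simp
  show "finite PP" unfolding PP_alt by simp
qed

lemma pt_PP: "pt a b \<in> PP" unfolding PP_def by blast

lemma elem_PP: "d \<in> PP" "e \<in> PP" "c \<in> PP" "f \<in> PP" "x \<in> PP"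
  "conj_by G x f \<in> PP" "conj_by G c f \<in> PP" "conj_by G x e \<in> PP" "conj_by G c e \<in> PP"
  using pt_PP[of 0 0] pt_PP[of 1 0] pt_PP[of 0 1] pt_PP[of 2 0] pt_PP[of 0 2] pt_PP[of 1 1]
    pt_PP[of 1 2] pt_PP[of 2 1] pt_PP[of 2 2]
  by (simp_all only: p00 p10 p01 p20 p02 p11 p12 p21 p22)

lemma line_third: assumes "L \<in> fischer_lines G D" "u \<in> L" "v \<in> L" "u \<noteq> v" "u \<in> PP" "v \<in> PP"
  shows "L \<subseteq> PP"
proof -
  obtain a b where L: "L = {a, b, conj_by G a b}" and ab: "a \<in> D" "b \<in> D" "\<not> commute G a b"
    using assms(1) unfolding fischer_lines_def by auto
  note l = line1[OF ab]
  have "a \<in> PP \<and> b \<in> PP \<and> conj_by G a b \<in> PP"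
  proof -
    have c1: "a \<in> PP \<Longrightarrow> b \<in> PP \<Longrightarrow> ?thesis" using PP_conj by blast
    have c2: "a \<in> PP \<Longrightarrow> conj_by G a b \<in> PP \<Longrightarrow> ?thesis" using PP_conj[of a "conj_by G a b"] l by auto
    have c3: "b \<in> PP \<Longrightarrow> conj_by G a b \<in> PP \<Longrightarrow> ?thesis" using PP_conj[of b "conj_by G a b"] l by auto
    show ?thesis using assms(2-6) L c1 c2 c3 by auto
  qed
  then show ?thesis using L by auto
qed

lemma PP_sub: "fischer_subspace G D PP"
  unfolding fischer_subspace_def using PP_D line_third by blast

lemma PP_aff: "is_affine_plane_3 G D PP"
  unfolding is_affine_plane_3_def
proof (intro conjI PP_fin PP_card ballI impI)
  fix u v assume uv: "u \<in> PP" "v \<in> PP" "u \<noteq> v"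
  let ?L = "{u, v, conj_by G u v}"
  have "?L \<in> fischer_lines G D" using uv PP_D PP_nc unfolding fischer_lines_def by blast
  moreover have "?L \<subseteq> PP" using uv PP_conj by auto
  ultimately show "\<exists>L\<in>induced_lines G D PP. u \<in> L \<and> v \<in> L"
    unfolding induced_lines_def by blast
qed

lemma PP_plane: "fischer_plane G D PP"
proof -
  define L1 where "L1 = {d, e, conj_by G d e}"
  define L2 where "L2 = {d, c, conj_by G d c}"
  have l1: "L1 \<in> fischer_lines G D" unfolding L1_def by (rule line_in[OF dD eD nde])
  have l2: "L2 \<in> fischer_lines G D" unfolding L2_def by (rule line_in[OF dD cD ndc])
  have c1: "c \<noteq> d" using ndc comm_refl by metis
  have c2: "c \<noteq> e" using nec comm_refl by metis
  have c3: "c \<noteq> conj_by G d e" using ncf comm_refl by metis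
  have "c \<notin> L1" unfolding L1_def using c1 c2 c3 by simp
  moreover have "c \<in> L2" unfolding L2_def by simp
  ultimately have ne: "L1 \<noteq> L2" by metis
  have "d \<in> L1 \<inter> L2" unfolding L1_def L2_def by simp
  then have int: "L1 \<inter> L2 \<noteq> {}" by (metis empty_iff)
  have x2: "conj_by G d c = x" using L_cd(1) by (simp add: x_def)
  have pg: "PP = generated_subspace G D (L1 \<union> L2)"
  proof
    show "generated_subspace G D (L1 \<union> L2) \<subseteq> PP"
      unfolding generated_subspace_def
      apply (rule Inter_lower)
      using PP_sub elem_PP x2 by (auto simp: f_def L1_def L2_def)
    show "PP \<subseteq> generated_subspace G D (L1 \<union> L2)"
      unfolding generated_subspace_def
    proof (rule Inter_greatest)
      fix S assume "S \<in> {S. fischer_subspace G D S \<and> L1 \<union> L2 \<subseteq> S}"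
      then have S: "fischer_subspace G D S" "L1 \<union> L2 \<subseteq> S" by simp_all
      have s: "d \<in> S" "e \<in> S" "c \<in> S" "f \<in> S" "x \<in> S" using S x2 by (auto simp: f_def L1_def L2_def)
      have n1: "\<not> commute G x f" using noncomm[of 0 2 2 0] p02 p20 by simp
      have s2: "conj_by G c e \<in> S" "conj_by G c f \<in> S" "conj_by G x e \<in> S" "conj_by G x f \<in> S"
        using closure_sub[OF S(1) s(3) s(2) cD eD nce] closure_sub[OF S(1) s(3) s(4) cD fD ncf']
          closure_sub[OF S(1) s(5) s(2) xD eD nxe] closure_sub[OF S(1) s(5) s(4) xD fD n1] by simp_all
      show "PP \<subseteq> S"
      proof
        fix u assume "u \<in> PP"
        then obtain a b where "u = pt a b" unfolding PP_def by blast
        then have "u = pt (a mod 3) (b mod 3)" using pt_cong[of a "a mod 3" b "b mod 3"] by simp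
        moreover have "\<forall>a\<in>{0,1,2::int}. \<forall>b\<in>{0,1,2::int}. pt a b \<in> S"
          using s s2 by (simp add: p00 p10 p20 p01 p02 p11 p12 p21 p22)
        ultimately show "u \<in> S" using m3[of a] m3[of b] by metis
      qed
    qed
  qed
  show ?thesis unfolding fischer_plane_def
    apply (rule bexI[OF _ l1])
    apply (rule bexI[OF _ l2])
    using ne int pg by (intro conjI)
qed

lemma tri_contra: "symplectic_type G D \<Longrightarrow> False"
  using PP_plane PP_aff unfolding symplectic_type_def by blast


end

context tt3 begin

lemma key: assumes sy: "symplectic_type G D" and dD: "d \<in> D" and eD: "e \<in> D"
  and nde: "\<not> commute G d e" and wD: "w \<in> D"
  shows "basis_form G d w + basis_form G e w + basis_form G (conj_by G d e) w = 0"
proof -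
  let ?f = "conj_by G d e"
  have fD: "?f \<in> D" using conjcl dD eD by auto
  note l = line1[OF dD eD nde]
  show ?thesis
  proof (cases "commute G d w")
    case True
    note dw = True
    show ?thesis
    proof (cases "commute G e w")
      case True
      then have "commute G w ?f" using comm_prod[OF wD dD eD] dw comm_sym by blast
      then show ?thesis using dw True comm_sym by (simp add: basis_form_def)
    next
      case False
      have "\<not> commute G w ?f"
      proof
        assume "commute G w ?f"
        then have "commute G w (conj_by G ?f d)" using comm_prod[OF wD fD dD] dw comm_sym by blast
        then show False using False l comm_sym by simp
      qed
      then show ?thesis using dw False comm_sym by (simp add: basis_form_def)
    qed
  next
    case False
    note dw = False
    show ?thesis
    proof (cases "commute G e w")
      case True
      have "\<not> commute G w ?f"
      proof
        assume "commute G w ?f"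
        then have "commute G w (conj_by G ?f e)" using comm_prod[OF wD fD eD] True comm_sym by blast
        then show False using dw l comm_sym by simp
      qed
      then show ?thesis using dw True comm_sym by (simp add: basis_form_def)
    next
      case False
      have "commute G w ?f"
      proof (rule ccontr)
        assume "\<not> commute G w ?f"
        then interpret tri G D d e w
          by unfold_locales (simp_all add: dD eD wD nde dw False)
        show False using tri_contra sy by blast
      qed
      then show ?thesis using dw False comm_sym by (simp add: basis_form_def)
    qed
  qed
qed

lemma ifone: "(if P then 1 else 0) * (b::bit) = (if P then b else 0)" by simp

lemma bp_supp: "basis_prod G d e c \<noteq> 0 \<Longrightarrow> c \<in> {d, e, conj_by G d e}"
  unfolding basis_prod_def by (auto split: if_splits)

lemma inner0: assumes sy: "symplectic_type G D" and dD: "d \<in> D" and eD: "e \<in> D" and wD: "w \<in> D"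
  and T: "finite T" "{d, e, conj_by G d e} \<subseteq> T"
  shows "(\<Sum>c\<in>T. basis_prod G d e c * basis_form G c w) = 0"
proof (cases "commute G d e")
  case True
  then show ?thesis by (simp add: basis_prod_def)
next
  case False
  have "(\<Sum>c\<in>T. basis_prod G d e c * basis_form G c w) =
     (\<Sum>c\<in>T. (if c = d then basis_form G c w else 0)) + (\<Sum>c\<in>T. (if c = e then basis_form G c w else 0))
     + (\<Sum>c\<in>T. (if c = conj_by G d e then basis_form G c w else 0))"
  proof -
    have "\<And>c. basis_prod G d e c * basis_form G c w =
       (if c = d then basis_form G c w else 0) + (if c = e then basis_form G c w else 0)
       + (if c = conj_by G d e then basis_form G c w else 0)"
    proof -
      fix c
      have n1: "d \<noteq> e" using False comm_refl by metis
      have n2: "d \<noteq> conj_by G d e" using ncz(1)[OF dD eD False] comm_refl by metis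
      have n3: "e \<noteq> conj_by G d e" using ncz(2)[OF dD eD False] comm_refl by metis
      show "basis_prod G d e c * basis_form G c w =
       (if c = d then basis_form G c w else 0) + (if c = e then basis_form G c w else 0)
       + (if c = conj_by G d e then basis_form G c w else 0)"
        using False n1 n2 n3
        by (cases "c = d"; cases "c = e"; cases "c = conj_by G d e") (simp_all add: basis_prod_def)
    qed
    then show ?thesis by (simp add: sum.distrib)
  qed
  also have "\<dots> = basis_form G d w + basis_form G e w + basis_form G (conj_by G d e) w"
    using T by (simp add: sum.delta)
  also have "\<dots> = 0" using key[OF sy dD eD False wD] .
  finally show ?thesis .
qed


lemma main: assumes sy: "symplectic_type G D" and xs: "x \<in> alg_space D" and ys: "y \<in> alg_space D"
  shows "alg_prod G x y \<in> alg_radical G D"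
proof -
  define X where "X = supp x"
  define Y where "Y = supp y"
  have X: "finite X" "X \<subseteq> D" using xs by (auto simp: X_def supp_def alg_space_def)
  have Y: "finite Y" "Y \<subseteq> D" using ys by (auto simp: Y_def supp_def alg_space_def)
  define T where "T = (\<Union>d\<in>X. \<Union>e\<in>Y. {d, e, conj_by G d e})"
  have Tfin: "finite T" unfolding T_def using X Y by auto
  have TD: "T \<subseteq> D" unfolding T_def using X Y conjcl by blast
  have Tsub: "{d, e, conj_by G d e} \<subseteq> T" if "d \<in> X" "e \<in> Y" for d e
    unfolding T_def using that by blast
  define p where "p = alg_prod G x y"
  have pc: "p c = (\<Sum>d\<in>X. \<Sum>e\<in>Y. x d * y e * basis_prod G d e c)" for c
    unfolding p_def alg_prod_def X_def Y_def by simp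
  have p0: "p c = 0" if "c \<notin> T" for c
  proof -
    have "basis_prod G d e c = 0" if "d \<in> X" "e \<in> Y" for d e
      using bp_supp Tsub[OF that] \<open>c \<notin> T\<close> by blast
    then show ?thesis unfolding pc by simp
  qed
  have suppp: "supp p \<subseteq> T" using p0 unfolding supp_def by blast
  have pspace: "p \<in> alg_space D"
    unfolding alg_space_def using suppp Tfin TD finite_subset unfolding supp_def by blast
  have inner: "(\<Sum>c\<in>T. p c * basis_form G c w) = 0" if wD: "w \<in> D" for w
  proof -
    have "(\<Sum>c\<in>T. p c * basis_form G c w)
       = (\<Sum>c\<in>T. \<Sum>d\<in>X. \<Sum>e\<in>Y. x d * y e * (basis_prod G d e c * basis_form G c w))"
      unfolding pc by (simp add: sum_distrib_right mult.assoc)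
    also have "\<dots> = (\<Sum>d\<in>X. \<Sum>e\<in>Y. \<Sum>c\<in>T. x d * y e * (basis_prod G d e c * basis_form G c w))"
      by (simp add: sum.swap[of _ T] sum.swap[of _ T Y])
    also have "\<dots> = (\<Sum>d\<in>X. \<Sum>e\<in>Y. x d * y e * (\<Sum>c\<in>T. basis_prod G d e c * basis_form G c w))"
      by (simp add: sum_distrib_left)
    also have "\<dots> = 0"
    proof (rule sum.neutral, rule ballI, rule sum.neutral, rule ballI)
      fix d e assume "d \<in> X" "e \<in> Y"
      then show "x d * y e * (\<Sum>c\<in>T. basis_prod G d e c * basis_form G c w) = 0"
        using inner0[OF sy _ _ wD Tfin Tsub] X Y by auto
    qed
    finally show ?thesis .
  qed
  have "alg_form G p z = 0" if zs: "z \<in> alg_space D" for z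
  proof -
    define Z where "Z = supp z"
    have Z: "finite Z" "Z \<subseteq> D" using zs by (auto simp: Z_def supp_def alg_space_def)
    have "alg_form G p z = (\<Sum>c\<in>supp p. \<Sum>w\<in>Z. p c * z w * basis_form G c w)"
      unfolding alg_form_def Z_def by simp
    also have "\<dots> = (\<Sum>c\<in>T. \<Sum>w\<in>Z. p c * z w * basis_form G c w)"
      by (rule sum.mono_neutral_left[OF Tfin suppp]) (auto simp: supp_def)
    also have "\<dots> = (\<Sum>w\<in>Z. z w * (\<Sum>c\<in>T. p c * basis_form G c w))"
      by (simp add: sum.swap[of _ T] sum_distrib_left mult.assoc mult.left_commute)
    also have "\<dots> = 0" using inner Z by (simp add: subset_eq)
    finally show ?thesis .
  qed
  then show ?thesis using pspace unfolding alg_radical_def p_def by blast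
qed

end

context group begin

lemma braid_from_ord:
  assumes xc: "x \<in> carrier G" and yc: "y \<in> carrier G"
    and xx: "x \<otimes>\<^bsub>G\<^esub> x = \<one>\<^bsub>G\<^esub>" and yy: "y \<otimes>\<^bsub>G\<^esub> y = \<one>\<^bsub>G\<^esub>"
    and o: "group.ord G (x \<otimes>\<^bsub>G\<^esub> y) \<in> {1,2,3}" and nc: "\<not> commute G x y"
  shows "x \<otimes>\<^bsub>G\<^esub> y \<otimes>\<^bsub>G\<^esub> x = y \<otimes>\<^bsub>G\<^esub> x \<otimes>\<^bsub>G\<^esub> y"
proof -
  have ix: "inv x = x" using xx xc by (simp add: inv_equality)
  have iy: "inv y = y" using yy yc by (simp add: inv_equality)
  have cx: "\<And>z. z \<in> carrier G \<Longrightarrow> x \<otimes> (x \<otimes> z) = z" using xx xc by (metis l_one m_assoc)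
  have cy: "\<And>z. z \<in> carrier G \<Longrightarrow> y \<otimes> (y \<otimes> z) = z" using yy yc by (metis l_one m_assoc)
  have xyc: "x \<otimes> y \<in> carrier G" using xc yc by simp
  have pw: "(x \<otimes> y) [^] ord (x \<otimes> y) = \<one>" using xyc by simp
  consider "ord (x \<otimes> y) = 1" | "ord (x \<otimes> y) = 2" | "ord (x \<otimes> y) = 3" using o by auto
  then show ?thesis
  proof cases
    case 1
    then have "x \<otimes> y = \<one>" using ord_eq_1 xyc by simp
    then have "inv y = x" using inv_equality[of x y] xc yc by simp
    then have "y = x" using ix yc by (metis inv_inv)
    then show ?thesis using nc by (simp add: commute_def)
  next
    case 2
    then have h: "x \<otimes> (y \<otimes> (x \<otimes> y)) = \<one>" using pw xc yc
      by (simp add: numeral_2_eq_2 m_assoc)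
    have "y \<otimes> (x \<otimes> (x \<otimes> (y \<otimes> (x \<otimes> y)))) = y \<otimes> x" using h xc yc by simp
    then have "x \<otimes> y = y \<otimes> x" using xc yc cx cy by simp
    then show ?thesis using nc by (simp add: commute_def)
  next
    case 3
    then have h: "(x \<otimes> y \<otimes> x) \<otimes> (y \<otimes> x \<otimes> y) = \<one>" using pw xc yc
      by (simp add: numeral_3_eq_3 m_assoc)
    then have "inv (y \<otimes> x \<otimes> y) = x \<otimes> y \<otimes> x" using inv_equality xc yc by simp
    moreover have "inv (y \<otimes> x \<otimes> y) = y \<otimes> x \<otimes> y" using xc yc ix iy
      by (simp add: inv_mult_group m_assoc)
    ultimately show ?thesis by simp
  qed
qed

lemma tt3_from:
  assumes "three_transposition_class G D"
  shows "tt3 G D"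
proof -
  have Ds: "D \<subseteq> carrier G"
    and cl: "\<exists>d0\<in>D. D = {g \<otimes>\<^bsub>G\<^esub> d0 \<otimes>\<^bsub>G\<^esub> inv\<^bsub>G\<^esub> g | g. g \<in> carrier G}"
    and inv: "\<forall>d\<in>D. d \<noteq> \<one>\<^bsub>G\<^esub> \<and> d \<otimes>\<^bsub>G\<^esub> d = \<one>\<^bsub>G\<^esub>"
    and o: "\<forall>d\<in>D. \<forall>e\<in>D. group.ord G (d \<otimes>\<^bsub>G\<^esub> e) \<in> {1, 2, 3}"
    using assms unfolding three_transposition_class_def by auto
  obtain d0 where d0: "d0 \<in> D" and Deq: "D = {g \<otimes> d0 \<otimes> inv g | g. g \<in> carrier G}" using cl by blast
  have d0c: "d0 \<in> carrier G" using d0 Ds by auto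
  show ?thesis
  proof (unfold_locales)
    show "D \<subseteq> carrier G" by (rule Ds)
    show "\<And>d. d \<in> D \<Longrightarrow> d \<otimes> d = \<one>" using inv by auto
    show "\<And>x y. x \<in> D \<Longrightarrow> y \<in> D \<Longrightarrow> \<not> commute G x y \<Longrightarrow> x \<otimes> y \<otimes> x = y \<otimes> x \<otimes> y"
      using braid_from_ord Ds inv o by (meson subsetD)
    show "\<And>x y. x \<in> D \<Longrightarrow> y \<in> D \<Longrightarrow> conj_by G x y \<in> D"
    proof -
      fix x y assume xD: "x \<in> D" and yD: "y \<in> D"
      obtain g where g: "g \<in> carrier G" and xg: "x = g \<otimes> d0 \<otimes> inv g" using xD Deq by blast
      have yc: "y \<in> carrier G" using yD Ds by auto
      have "conj_by G x y = (inv y \<otimes> g) \<otimes> d0 \<otimes> inv (inv y \<otimes> g)"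
        unfolding conj_by_def xg using g yc d0c by (simp add: inv_mult_group m_assoc)
      moreover have "inv y \<otimes> g \<in> carrier G" using g yc by simp
      ultimately show "conj_by G x y \<in> D" using Deq by blast
    qed
  qed
qed

end

theorem lemma5p1:
  fixes G :: "('a, 'b) monoid_scheme" and D :: "'a set"
  assumes "three_transposition_class G D"
    and "generates G D"
    and "symplectic_type G D"
  shows "\<forall>x\<in>alg_space D. \<forall>y\<in>alg_space D. alg_prod G x y \<in> alg_radical G D"
proof -
  interpret group G using assms(1) unfolding three_transposition_class_def by blast
  interpret tt3 G D by (rule tt3_from[OF assms(1)])
  show ?thesis using main[OF assms(3)] by blast
qed

end
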